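(* For every $\mu\in P(\mathbb{R})$ we have $\operatorname{card}\big((\{\mu\}^1)^1\big)=1$ if and only if $\mu$ is a Dirac measure.
   Context: $P(\mathbb{R})$ is the set of Borel probability measures on $\mathbb{R}$, with the Kuiper distance $d_{Ku}(\mu,\nu)=\sup\{|\mu(I)-\nu(I)| : I\text{ a non-degenerate interval of }\mathbb{R}\}$. For $\mathcal{M}\subseteq P(\mathbb{R})$, $\mathcal{M}^1=\{\nu\in P(\mathbb{R}) : d_{Ku}(\mu,\nu)=1\text{ for all }\mu\in\mathcal{M}\}$. A Dirac measure is $\delta_x$, the probability measure concentrated at a point $x\in\mathbb{R}$. *)

theory Defs
  imports "HOL-Analysis.Analysis" "HOL-Probability.Probability"
begin

definition ProbR :: "real measure set" where
  "ProbR = {M. prob_space M \<and> sets M = sets borel}"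

definition nondeg_interval :: "real set \<Rightarrow> bool" where
  "nondeg_interval I \<longleftrightarrow> is_interval I \<and> (\<exists>a b. a \<in> I \<and> b \<in> I \<and> a < b)"

definition d_Ku :: "real measure \<Rightarrow> real measure \<Rightarrow> real" where
  "d_Ku \<mu> \<nu> = (SUP I \<in> {I. nondeg_interval I}. \<bar>measure \<mu> I - measure \<nu> I\<bar>)"

definition one_set :: "real measure set \<Rightarrow> real measure set" where
  "one_set \<M> = {\<nu> \<in> ProbR. \<forall>\<mu> \<in> \<M>. d_Ku \<mu> \<nu> = 1}"

definition is_dirac :: "real measure \<Rightarrow> bool" where
  "is_dirac \<mu> \<longleftrightarrow> (\<exists>x. \<mu> = return borel x)"

end

theory Submission
  imports Defs
begin

lemma ProbR_D:
  assumes "M \<in> ProbR"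
  shows "prob_space M" "sets M = sets borel" "space M = UNIV"
  using assms unfolding ProbR_def
  by (auto dest: sets_eq_imp_space_eq)

lemma ProbR_meas:
  assumes "M \<in> ProbR"
  shows "0 \<le> measure M A" "measure M A \<le> 1"
  using ProbR_D(1)[OF assms] by (auto intro: prob_space.prob_le_1)

lemma nondeg_ne: "{I. nondeg_interval I} \<noteq> {}"
proof -
  have "nondeg_interval (UNIV::real set)" unfolding nondeg_interval_def
  proof (intro conjI exI)
    show "(0::real) < 1" by simp
  qed auto
  thus ?thesis by blast
qed

lemma dku_bdd:
  assumes "M \<in> ProbR" "N \<in> ProbR"
  shows "bdd_above ((\<lambda>I. \<bar>measure M I - measure N I\<bar>) ` {I. nondeg_interval I})"
proof (rule bdd_aboveI2)
  fix I show "\<bar>measure M I - measure N I\<bar> \<le> 1"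
    using ProbR_meas[OF assms(1), of I] ProbR_meas[OF assms(2), of I] by linarith
qed

lemma dku_ge:
  assumes "M \<in> ProbR" "N \<in> ProbR" "nondeg_interval I"
  shows "\<bar>measure M I - measure N I\<bar> \<le> d_Ku M N"
  unfolding d_Ku_def using assms by (intro cSUP_upper dku_bdd) auto

lemma dku_le:
  assumes "\<And>I. nondeg_interval I \<Longrightarrow> \<bar>measure M I - measure N I\<bar> \<le> c"
  shows "d_Ku M N \<le> c"
  unfolding d_Ku_def using assms nondeg_ne by (intro cSUP_least) auto

lemma dku_sym: "d_Ku M N = d_Ku N M"
  unfolding d_Ku_def by (simp add: abs_minus_commute)

lemma dku_one_I:
  assumes "M \<in> ProbR" "N \<in> ProbR"
    and "\<And>e. e > 0 \<Longrightarrow> \<exists>I. nondeg_interval I \<and> \<bar>measure M I - measure N I\<bar> > 1 - e"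
  shows "d_Ku M N = 1"
proof -
  have "d_Ku M N \<le> 1"
  proof (rule dku_le)
    fix I show "\<bar>measure M I - measure N I\<bar> \<le> 1"
      using ProbR_meas[OF assms(1), of I] ProbR_meas[OF assms(2), of I] by linarith
  qed
  moreover have "d_Ku M N \<ge> 1"
  proof (rule field_le_epsilon)
    fix e :: real assume "e > 0"
    then obtain I where "nondeg_interval I" "\<bar>measure M I - measure N I\<bar> > 1 - e"
      using assms(3) by blast
    with dku_ge[OF assms(1,2)] show "1 \<le> d_Ku M N + e" by fastforce
  qed
  ultimately show ?thesis by simp
qed

lemma dku_one_D:
  assumes "M \<in> ProbR" "N \<in> ProbR" "d_Ku M N = 1" "e > 0"
  shows "\<exists>I. nondeg_interval I \<and> \<bar>measure M I - measure N I\<bar> > 1 - e"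
proof -
  have "1 - e < d_Ku M N" using assms by simp
  thus ?thesis unfolding d_Ku_def using less_cSUP_iff[OF nondeg_ne dku_bdd[OF assms(1,2)]]
    by auto
qed

lemma dirac_of_atom:
  assumes "M \<in> ProbR" "measure M {x} = 1"
  shows "M = return borel x"
proof -
  interpret prob_space M using ProbR_D[OF assms(1)] by simp
  have sM: "sets M = sets borel" "space M = UNIV" using ProbR_D[OF assms(1)] by auto
  show ?thesis
  proof (rule measure_eqI)
    show "sets M = sets (return borel x)" using sM by simp
    fix A assume A: "A \<in> sets M"
    have "measure M A = indicator A x"
    proof (cases "x \<in> A")
      case True
      then have "measure M {x} \<le> measure M A" using A sM by (intro finite_measure_mono) auto
      then show ?thesis using True assms(2) prob_le_1[of A] by simp
    next
      case False
      then have "measure M A \<le> measure M (space M - {x})" using A sM by (intro finite_measure_mono) auto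
      also have "\<dots> = 0" using prob_compl[of "{x}"] sM assms(2) by simp
      finally show ?thesis using False measure_nonneg[of M A] by simp
    qed
    then show "emeasure M A = emeasure (return borel x) A"
      using A sM by (simp add: emeasure_eq_measure split: split_indicator)
  qed
qed

lemma nondirac_split:
  assumes "M \<in> ProbR" "\<not> is_dirac M"
  shows "\<exists>J \<in> sets borel. 0 < measure M J \<and> measure M J < 1"
proof (rule ccontr)
  assume H: "\<not> ?thesis"
  have RD: "real_distribution M" using ProbR_D[OF assms(1)]
    unfolding real_distribution_def real_distribution_axioms_def by simp
  interpret real_distribution M by (rule RD)
  have sM: "sets M = sets borel" "space M = UNIV" using ProbR_D[OF assms(1)] by auto
  have H01: "measure M J = 0 \<or> measure M J = 1" if "J \<in> sets borel" for J
  proof -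
    have "\<not> (0 < measure M J \<and> measure M J < 1)" using H that by blast
    thus ?thesis using measure_nonneg[of M J] prob_le_1[of J] by linarith
  qed
  have F01: "cdf M t = 0 \<or> cdf M t = 1" for t unfolding cdf_def by (rule H01) auto
  define S where "S = {t. cdf M t = 1}"
  have "eventually (\<lambda>i. cdf M (real i) > 1/2) sequentially"
    using cdf_lim_infty prob_space by (intro order_tendstoD) auto
  then obtain i where "cdf M (real i) > 1/2" unfolding eventually_sequentially by blast
  then have "real i \<in> S" using F01[of "real i"] unfolding S_def by auto
  then have Sne: "S \<noteq> {}" by blast
  have "eventually (\<lambda>i. cdf M (- real i) < 1/2) sequentially"
    using cdf_lim_neg_infty by (intro order_tendstoD) auto
  then obtain j where j: "cdf M (- real j) < 1/2" unfolding eventually_sequentially by blast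
  have Sb: "- real j \<le> t" if "t \<in> S" for t
  proof (rule ccontr)
    assume "\<not> ?thesis"
    then have "cdf M t \<le> cdf M (- real j)" by (intro cdf_nondecreasing) auto
    with that j show False unfolding S_def by auto
  qed
  then have bS: "bdd_below S" unfolding bdd_below_def by blast
  define x where "x = Inf S"
  have up: "cdf M t = 1" if tx: "t > x" for t
  proof -
    obtain s where "s \<in> S" "s < t" using cInf_lessD[OF Sne] tx unfolding x_def by blast
    then have "cdf M s \<le> cdf M t" by (intro cdf_nondecreasing) auto
    with \<open>s \<in> S\<close> cdf_bounded_prob[of t] show ?thesis unfolding S_def by auto
  qed
  have lo: "cdf M t = 0" if "t < x" for t
  proof -
    have "t \<notin> S" using cInf_lower[OF _ bS, of t] that unfolding x_def by auto
    then show ?thesis using F01[of t] unfolding S_def by auto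
  qed
  have "(\<lambda>n. measure M {.. x + 1 / Suc n}) \<longlonglongrightarrow> measure M (\<Inter>n. {.. x + 1 / Suc n})"
    by (intro finite_Lim_measure_decseq) (auto simp: decseq_def sM frac_le)
  moreover have "(\<Inter>n. {.. x + 1 / Suc n}) = {..x}"
  proof (rule set_eqI, rule iffI)
    fix y assume y: "y \<in> (\<Inter>n. {.. x + 1 / Suc n})"
    show "y \<in> {..x}"
    proof (rule ccontr)
      assume "y \<notin> {..x}" then have "y - x > 0" by simp
      then obtain n where n: "1 / real (Suc n) < y - x" using reals_Archimedean[of "y - x"]
        by (auto simp: divide_inverse)
      have "y \<le> x + 1 / real (Suc n)" using y by blast
      with n show False by simp
    qed
  next
    fix y assume "y \<in> {..x}" then show "y \<in> (\<Inter>n. {.. x + 1 / Suc n})"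
      by (auto intro!: add_increasing2)
  qed
  moreover have "(\<lambda>n. measure M {.. x + 1 / Suc n}) = (\<lambda>n. 1)"
    using up unfolding cdf_def by (intro ext) simp
  ultimately have X1: "measure M {..x} = 1" using LIMSEQ_unique[OF _ tendsto_const] by metis
  have "(\<lambda>n. measure M {.. x - 1 / Suc n}) \<longlonglongrightarrow> measure M (\<Union>n. {.. x - 1 / Suc n})"
    by (intro finite_Lim_measure_incseq) (auto simp: incseq_def sM frac_le)
  moreover have "(\<Union>n. {.. x - 1 / Suc n}) = {..<x}"
  proof (rule set_eqI, rule iffI)
    fix y assume "y \<in> {..<x}" then have "x - y > 0" by simp
    then obtain n where n: "1 / real (Suc n) < x - y" using reals_Archimedean[of "x - y"]
      by (auto simp: divide_inverse)
    then have "y \<in> {.. x - 1 / Suc n}" by simp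
    then show "y \<in> (\<Union>n. {.. x - 1 / Suc n})" by blast
  next
    fix y assume "y \<in> (\<Union>n. {.. x - 1 / Suc n})"
    then obtain n where "y \<le> x - 1 / real (Suc n)" by auto
    moreover have "1 / real (Suc n) > 0" by (simp del: of_nat_Suc)
    ultimately have "y < x" by linarith
    then show "y \<in> {..<x}" by simp
  qed
  moreover have "(\<lambda>n. measure M {.. x - 1 / Suc n}) = (\<lambda>n. 0)"
    using lo unfolding cdf_def by (intro ext) simp
  ultimately have X0: "measure M {..<x} = 0" using LIMSEQ_unique[OF _ tendsto_const] by metis
  have "{..x} = {..<x} \<union> {x}" by auto
  then have "measure M {..x} = measure M {..<x} + measure M {x}"
    using finite_measure_Union[of "{..<x}" "{x}"] sM by auto
  then have "measure M {x} = 1" using X0 X1 by simp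
  then have "M = return borel x" using dirac_of_atom[OF assms(1)] by simp
  then show False using assms(2) unfolding is_dirac_def by blast
qed


lemma nondeg_UNIV: "nondeg_interval (UNIV::real set)"
  unfolding nondeg_interval_def
proof (intro conjI exI)
  show "(0::real) < 1" by simp
qed auto

lemma unif_ProbR:
  assumes "M \<in> ProbR" "A \<in> sets borel" "measure M A > 0"
  shows "uniform_measure M A \<in> ProbR"
    and "B \<in> sets borel \<Longrightarrow> measure (uniform_measure M A) B = measure M (A \<inter> B) / measure M A"
proof -
  interpret prob_space M using ProbR_D[OF assms(1)] by simp
  have sM: "sets M = sets borel" using ProbR_D[OF assms(1)] by auto
  have e: "emeasure M A = ennreal (measure M A)" by (simp add: emeasure_eq_measure)
  have ne: "emeasure M A \<noteq> 0" "emeasure M A \<noteq> \<infinity>" using assms(3) unfolding e by auto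
  show "uniform_measure M A \<in> ProbR"
    unfolding ProbR_def using prob_space_uniform_measure[OF ne] sM by simp
  show "B \<in> sets borel \<Longrightarrow> measure (uniform_measure M A) B = measure M (A \<inter> B) / measure M A"
    using measure_uniform_measure[OF ne, of B] sM by simp
qed

lemma return_ProbR: "return borel x \<in> ProbR"
  unfolding ProbR_def by (auto intro: prob_space_return)

lemma cond_dist_one:
  assumes mu: "\<mu> \<in> ProbR" and J: "J \<in> sets borel" and m: "measure \<mu> J > 0"
    and nu: "\<nu> \<in> ProbR" and d: "d_Ku \<mu> \<nu> = 1"
  shows "d_Ku \<nu> (uniform_measure \<mu> J) = 1"
proof (rule dku_one_I[OF nu unif_ProbR(1)[OF mu J m]])
  interpret prob_space \<mu> using ProbR_D[OF mu] by simp
  have sM: "sets \<mu> = sets borel" "space \<mu> = UNIV" using ProbR_D[OF mu] by auto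
  have sN: "sets \<nu> = sets borel" using ProbR_D[OF nu] by auto
  define m where "m = measure \<mu> J"
  have m0: "m > 0" "m \<le> 1" using m prob_le_1 unfolding m_def by auto
  fix e :: real assume e: "e > 0"
  show "\<exists>I. nondeg_interval I \<and> \<bar>measure \<nu> I - measure (uniform_measure \<mu> J) I\<bar> > 1 - e"
  proof (cases "e > 1")
    case True
    then show ?thesis using nondeg_UNIV by (intro exI[of _ UNIV]) auto
  next
    case False
    define \<delta> where "\<delta> = e * m / 2"
    have \<delta>: "\<delta> > 0" "\<delta> \<le> e / 2" using e m0 unfolding \<delta>_def by (auto simp: mult_left_le)
    obtain I where I: "nondeg_interval I" "\<bar>measure \<mu> I - measure \<nu> I\<bar> > 1 - \<delta>"
      using dku_one_D[OF mu nu d \<delta>(1)] by blast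
    have Ib: "I \<in> sets borel"
    proof (rule ccontr)
      assume "I \<notin> sets borel"
      then have "measure \<mu> I = 0" "measure \<nu> I = 0" using sM sN by (auto intro: measure_notin_sets)
      then show False using I(2) \<delta> False by simp
    qed
    define p where "p = measure \<mu> (J \<inter> I)"
    have rho: "measure (uniform_measure \<mu> J) I = p / m"
      using unif_ProbR(2)[OF mu J m Ib] unfolding p_def m_def by simp
    have "I = (I \<inter> J) \<union> (I - J)" by auto
    then have u1: "measure \<mu> I = measure \<mu> (I \<inter> J) + measure \<mu> (I - J)"
      using finite_measure_Union[of "I \<inter> J" "I - J"] sM J Ib by (metis Diff_disjoint Int_Diff_disjoint sets.Diff sets.Int)
    have u2: "measure \<mu> (I - J) \<le> measure \<mu> (space \<mu> - J)"
      using sM J Ib by (intro finite_measure_mono) auto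
    have u3: "measure \<mu> (space \<mu> - J) = 1 - m" using prob_compl[of J] J sM unfolding m_def by simp
    have u4: "p = measure \<mu> (I \<inter> J)" unfolding p_def by (simp add: Int_commute)
    have p1: "p \<ge> m + measure \<mu> I - 1" using u1 u2 u3 u4 by linarith
    have p2: "p \<le> measure \<mu> I" unfolding p_def using sM J Ib by (intro finite_measure_mono) auto
    have nb: "0 \<le> measure \<nu> I" "measure \<nu> I \<le> 1" "0 \<le> measure \<mu> I" "measure \<mu> I \<le> 1"
      using ProbR_meas[OF nu] ProbR_meas[OF mu] by auto
    show ?thesis
    proof (intro exI[of _ I] conjI I(1))
      show "\<bar>measure \<nu> I - measure (uniform_measure \<mu> J) I\<bar> > 1 - e"
      proof (cases "measure \<mu> I \<ge> measure \<nu> I")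
        case True
        then have dd: "measure \<mu> I - measure \<nu> I > 1 - \<delta>" using I(2) by simp
        have "measure \<mu> I > 1 - \<delta>" using dd nb by linarith
        moreover have "measure \<nu> I < \<delta>" using dd nb by linarith
        ultimately have "p > m * (1 - e / 2)" using p1 unfolding \<delta>_def by (simp add: algebra_simps)
        then have "p / m > 1 - e / 2" using m0 by (simp add: pos_less_divide_eq mult.commute)
        then show ?thesis unfolding rho using \<open>measure \<nu> I < \<delta>\<close> \<delta> by linarith
      next
        case False
        then have dd: "measure \<nu> I - measure \<mu> I > 1 - \<delta>" using I(2) by simp
        have "measure \<nu> I > 1 - \<delta>" using dd nb by linarith
        moreover have "measure \<mu> I < \<delta>" using dd nb by linarith
        ultimately have "p < m * (e / 2)" using p2 unfolding \<delta>_def by (simp add: algebra_simps)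
        then have "p / m < e / 2" using m0 by (simp add: pos_divide_less_eq mult.commute)
        then show ?thesis unfolding rho using \<open>measure \<nu> I > 1 - \<delta>\<close> \<delta> by linarith
      qed
    qed
  qed
qed

lemma arith1:
  fixes a p :: real
  assumes "0 \<le> a" "a < 1" "0 \<le> p" "p \<le> 1 - a"
  shows "\<bar>p / (1 - a) - (p + a)\<bar> \<le> a" "\<bar>p / (1 - a) - p\<bar> \<le> a"
proof -
  define t where "t = p / (1 - a)"
  have t: "0 \<le> t" "t \<le> 1" using assms unfolding t_def by (auto simp: divide_le_eq_1)
  have pt: "p = t * (1 - a)" using assms unfolding t_def by simp
  have "a * t \<le> a" using t assms by (simp add: mult_left_le)
  moreover have "0 \<le> a * t" using t assms by simp
  moreover have "p / (1 - a) = t" by (simp add: t_def)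
  moreover have "p + a = t - a * t + a" "p = t - a * t" using pt by (simp_all add: algebra_simps)
  ultimately show "\<bar>p / (1 - a) - (p + a)\<bar> \<le> a" "\<bar>p / (1 - a) - p\<bar> \<le> a"
    by (simp_all add: abs_le_iff)
qed

lemma dirac_side:
  assumes rho: "\<rho> \<in> ProbR" and a1: "measure \<rho> {x} < 1"
  shows "uniform_measure \<rho> (- {x}) \<in> ProbR"
    and "d_Ku (return borel x) (uniform_measure \<rho> (- {x})) = 1"
    and "d_Ku (uniform_measure \<rho> (- {x})) \<rho> \<le> measure \<rho> {x}"
proof -
  interpret prob_space \<rho> using ProbR_D[OF rho] by simp
  have sM: "sets \<rho> = sets borel" "space \<rho> = UNIV" using ProbR_D[OF rho] by auto
  define a where "a = measure \<rho> {x}"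
  have a: "0 \<le> a" "a < 1" using a1 unfolding a_def by auto
  have cb: "- {x} \<in> sets borel" by auto
  have ca: "measure \<rho> (- {x}) = 1 - a"
    using prob_compl[of "{x}"] sM unfolding a_def by (simp add: Compl_eq_Diff_UNIV)
  then have cpos: "measure \<rho> (- {x}) > 0" using a by simp
  define \<nu> where "\<nu> = uniform_measure \<rho> (- {x})"
  have nuP: "\<nu> \<in> ProbR" unfolding \<nu>_def by (rule unif_ProbR(1)[OF rho cb cpos])
  then show "uniform_measure \<rho> (- {x}) \<in> ProbR" unfolding \<nu>_def .
  have nuB: "measure \<nu> B = measure \<rho> (- {x} \<inter> B) / (1 - a)" if "B \<in> sets borel" for B
    using unif_ProbR(2)[OF rho cb cpos that] ca unfolding \<nu>_def by simp
  have sN: "sets \<nu> = sets borel" using ProbR_D[OF nuP] by simp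
  interpret N: prob_space \<nu> using ProbR_D[OF nuP] by simp
  show "d_Ku (return borel x) (uniform_measure \<rho> (- {x})) = 1"
    unfolding \<nu>_def[symmetric]
  proof (rule dku_one_I[OF return_ProbR nuP])
    fix e :: real assume e: "e > 0"
    define A where "A n = {x - 1 / real (Suc n) .. x + 1 / real (Suc n)}" for n
    have "(\<lambda>n. measure \<nu> (A n)) \<longlonglongrightarrow> measure \<nu> (\<Inter>n. A n)"
    proof (rule N.finite_Lim_measure_decseq)
      show "range A \<subseteq> sets \<nu>" unfolding A_def sN by auto
      show "decseq A" unfolding decseq_def A_def
        by (auto intro!: diff_left_mono add_left_mono frac_le simp del: of_nat_Suc)
    qed
    moreover have "(\<Inter>n. A n) = {x}"
    proof (rule set_eqI, rule iffI)
      fix y assume y: "y \<in> (\<Inter>n. A n)"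
      show "y \<in> {x}"
      proof (rule ccontr)
        assume "y \<notin> {x}" then have "\<bar>y - x\<bar> > 0" by simp
        then obtain n where n: "1 / real (Suc n) < \<bar>y - x\<bar>" using reals_Archimedean[of "\<bar>y - x\<bar>"]
          by (auto simp: divide_inverse)
        have "y \<in> A n" using y by blast
        then have "\<bar>y - x\<bar> \<le> 1 / real (Suc n)" unfolding A_def by (simp del: of_nat_Suc add: abs_le_iff)
        with n show False by simp
      qed
    next
      fix y assume "y \<in> {x}" then show "y \<in> (\<Inter>n. A n)" unfolding A_def
        by (auto simp del: of_nat_Suc)
    qed
    moreover have "measure \<nu> {x} = 0" using nuB[of "{x}"] by simp
    ultimately have "(\<lambda>n. measure \<nu> (A n)) \<longlonglongrightarrow> 0" by simp
    then have "eventually (\<lambda>n. measure \<nu> (A n) < e) sequentially" using e by (intro order_tendstoD) auto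
    then obtain n where n: "measure \<nu> (A n) < e" unfolding eventually_sequentially by blast
    have xA: "x \<in> A n" unfolding A_def by (auto simp del: of_nat_Suc)
    have r1: "measure (return borel x) (A n) = 1" using measure_return[of "A n" borel x] xA
      unfolding A_def by simp
    have nd: "nondeg_interval (A n)" unfolding nondeg_interval_def A_def
    proof (intro conjI exI)
      show "is_interval {x - 1 / real (Suc n)..x + 1 / real (Suc n)}" by (rule is_interval_cc)
      show "x - 1 / real (Suc n) < x + 1 / real (Suc n)" by (simp del: of_nat_Suc)
    qed (auto simp del: of_nat_Suc)
    show "\<exists>I. nondeg_interval I \<and> \<bar>measure (return borel x) I - measure \<nu> I\<bar> > 1 - e"
      using nd r1 n measure_nonneg[of \<nu> "A n"] by (intro exI[of _ "A n"]) auto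
  qed
  show "d_Ku (uniform_measure \<rho> (- {x})) \<rho> \<le> measure \<rho> {x}"
    unfolding \<nu>_def[symmetric] a_def[symmetric]
  proof (rule dku_le)
    fix I :: "real set"
    show "\<bar>measure \<nu> I - measure \<rho> I\<bar> \<le> a"
    proof (cases "I \<in> sets borel")
      case False
      then have "measure \<nu> I = 0" "measure \<rho> I = 0" using sM sN by (auto intro: measure_notin_sets)
      then show ?thesis using a by simp
    next
      case Ib: True
      define p where "p = measure \<rho> (- {x} \<inter> I)"
      have p: "0 \<le> p" "p \<le> 1 - a" unfolding p_def using ca[symmetric] Ib sM
        by (auto intro!: finite_measure_mono)
      have nI: "measure \<nu> I = p / (1 - a)" using nuB[OF Ib] unfolding p_def .
      show ?thesis
      proof (cases "x \<in> I")
        case True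
        then have "I = (- {x} \<inter> I) \<union> {x}" by auto
        moreover have "measure \<rho> ((- {x} \<inter> I) \<union> {x}) = measure \<rho> (- {x} \<inter> I) + measure \<rho> {x}"
          by (rule finite_measure_Union) (auto simp: sM Ib)
        ultimately have "measure \<rho> I = p + a" unfolding p_def a_def by simp
        then show ?thesis using arith1(1)[OF a p] nI by simp
      next
        case False
        then have "- {x} \<inter> I = I" by auto
        then have "measure \<rho> I = p" unfolding p_def by simp
        then show ?thesis using arith1(2)[OF a p] nI by simp
      qed
    qed
  qed
qed

theorem lemma3p1:
  assumes "\<mu> \<in> ProbR"
  shows "card (one_set (one_set {\<mu>})) = 1 \<longleftrightarrow> is_dirac \<mu>"
proof -
  have mem: "\<mu> \<in> one_set (one_set {\<mu>})"
    using assms unfolding one_set_def by (auto simp: dku_sym)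
  show ?thesis
  proof
    assume c: "card (one_set (one_set {\<mu>})) = 1"
    show "is_dirac \<mu>"
    proof (rule ccontr)
      assume nd: "\<not> is_dirac \<mu>"
      obtain J where J: "J \<in> sets borel" "0 < measure \<mu> J" "measure \<mu> J < 1"
        using nondirac_split[OF assms nd] by blast
      define \<rho> where "\<rho> = uniform_measure \<mu> J"
      have rP: "\<rho> \<in> ProbR" unfolding \<rho>_def by (rule unif_ProbR(1)[OF assms J(1,2)])
      have "measure \<rho> J = 1" unfolding \<rho>_def using unif_ProbR(2)[OF assms J(1,2) J(1)] J by simp
      then have ne: "\<rho> \<noteq> \<mu>" using J by auto
      have "\<rho> \<in> one_set (one_set {\<mu>})"
        using rP cond_dist_one[OF assms J(1,2)] unfolding \<rho>_def one_set_def by auto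
      moreover obtain z where "one_set (one_set {\<mu>}) = {z}" using c card_1_singletonE by blast
      ultimately show False using mem ne by auto
    qed
  next
    assume "is_dirac \<mu>"
    then obtain x where x: "\<mu> = return borel x" unfolding is_dirac_def by blast
    have "one_set (one_set {\<mu>}) = {\<mu>}"
    proof (intro equalityI subsetI)
      fix \<rho> assume r: "\<rho> \<in> one_set (one_set {\<mu>})"
      then have rP: "\<rho> \<in> ProbR" and rd: "\<And>\<nu>. \<nu> \<in> one_set {\<mu>} \<Longrightarrow> d_Ku \<nu> \<rho> = 1"
        unfolding one_set_def by auto
      show "\<rho> \<in> {\<mu>}"
      proof (cases "measure \<rho> {x} = 1")
        case True
        then show ?thesis using dirac_of_atom[OF rP] x by simp
      next
        case False
        then have a1: "measure \<rho> {x} < 1" using ProbR_meas[OF rP, of "{x}"] by linarith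
        have "uniform_measure \<rho> (- {x}) \<in> one_set {\<mu>}"
          unfolding one_set_def using dirac_side(1,2)[OF rP a1] x by simp
        then have "d_Ku (uniform_measure \<rho> (- {x})) \<rho> = 1" by (rule rd)
        then show ?thesis using dirac_side(3)[OF rP a1] a1 by simp
      qed
    qed (use mem in auto)
    then show "card (one_set (one_set {\<mu>})) = 1" by simp
  qed
qed

end
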